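(* Let $\iota:\mathcal{Q}\to\mathcal{P}$ be an aligned grid inclusion with $\mathcal{P},\mathcal{Q}$ finite and $\uparrow\iota(\mathcal{Q})=\mathcal{P}$. The functor $\mathrm{Lan}_\iota:\operatorname{rep}\mathcal{Q}\to\operatorname{rep}\mathcal{P}$, $N\mapsto N\circ\lfloor-\rfloor_\iota$, has a left adjoint $\mathrm{C}:\operatorname{rep}\mathcal{P}\to\operatorname{rep}\mathcal{Q}$, and for all $A,B\subseteq\mathcal{P}$ such that every $b\in B$ satisfies $a\le b$ for some $a\in A$, \[ \mathrm{C}\big(\mathbb{k}_{\uparrow A\setminus\uparrow B}\big)\cong\mathbb{k}_{\uparrow\lfloor A\rfloor_\iota\setminus\uparrow\lfloor B\rfloor_\iota}. \] In particular $\mathrm{C}$ maps spread-decomposable representations to spread-decomposable representations.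
   Context: Fix a field $\mathbb{k}$. Grid poset: finite product of total orders with product order. Aligned grid inclusion: a product $\iota_1\times\cdots\times\iota_n$ of injective order-preserving maps of total orders. $\uparrow X=\{p:\exists x\in X, x\le p\}$; $\lfloor p\rfloor_\iota:=\bigvee\{q\in\mathcal{Q}:\iota(q)\le p\}$ and $\lfloor X\rfloor_\iota=\{\lfloor x\rfloor_\iota:x\in X\}$. For a finite poset, $\operatorname{rep}$ denotes functors to finite-dimensional $\mathbb{k}$-vector spaces. $\mathbb{k}_S$ is the indicator representation of a convex set $S$. A spread is a nonempty convex zigzag-connected subset; spread-decomposable means isomorphic to a finite direct sum of spread representations. *)

theory Defs
  imports "Jordan_Normal_Form.Matrix"
begin

text \<open>A representation of P
(a functor to finite-dimensional k-vector spaces) is modelled skeletally: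
the space at p is k^(dim p) and M p q is the matrix of the structure map
M(p) -> M(q) for p <= q; dim p is the size of the identity matrix M p p.\<close>

type_synonym ('p,'k) rep = "'p \<Rightarrow> 'p \<Rightarrow> 'k mat"

definition rdim :: "('p,'k) rep \<Rightarrow> 'p \<Rightarrow> nat" where
  "rdim M p = dim_row (M p p)"

definition is_rep :: "'p set \<Rightarrow> ('p \<Rightarrow> 'p \<Rightarrow> bool) \<Rightarrow> ('p,'k::field) rep \<Rightarrow> bool" where
  "is_rep P lo M \<longleftrightarrow>
     (\<forall>p\<in>P. M p p = 1\<^sub>m (rdim M p)) \<and>
     (\<forall>p\<in>P. \<forall>q\<in>P. lo p q \<longrightarrow> M p q \<in> carrier_mat (rdim M q) (rdim M p)) \<and>
     (\<forall>p\<in>P. \<forall>q\<in>P. \<forall>r\<in>P. lo p q \<longrightarrow> lo q r \<longrightarrow> M q r * M p q = M p r)"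

definition rep_hom :: "'p set \<Rightarrow> ('p \<Rightarrow> 'p \<Rightarrow> bool) \<Rightarrow> ('p,'k::field) rep \<Rightarrow> ('p,'k) rep
    \<Rightarrow> ('p \<Rightarrow> 'k mat) \<Rightarrow> bool" where
  "rep_hom P lo M N f \<longleftrightarrow>
     (\<forall>p\<in>P. f p \<in> carrier_mat (rdim N p) (rdim M p)) \<and>
     (\<forall>p\<in>P. \<forall>q\<in>P. lo p q \<longrightarrow> f q * M p q = N p q * f p)"

definition rep_iso :: "'p set \<Rightarrow> ('p \<Rightarrow> 'p \<Rightarrow> bool) \<Rightarrow> ('p,'k::field) rep \<Rightarrow> ('p,'k) rep \<Rightarrow> bool" where
  "rep_iso P lo M N \<longleftrightarrow>
     (\<exists>f g. rep_hom P lo M N f \<and> rep_hom P lo N M g \<and>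
        (\<forall>p\<in>P. g p * f p = 1\<^sub>m (rdim M p) \<and> f p * g p = 1\<^sub>m (rdim N p)))"

text \<open>Indicator representation k_S (S assumed convex).\<close>
definition indicator_rep :: "'p set \<Rightarrow> ('p,'k::field) rep" where
  "indicator_rep S = (\<lambda>p q. if p \<in> S \<and> q \<in> S then 1\<^sub>m 1
        else 0\<^sub>m (if q \<in> S then 1 else 0) (if p \<in> S then 1 else 0))"

fun dsum_rep :: "('p,'k::field) rep list \<Rightarrow> ('p,'k) rep" where
  "dsum_rep [] = (\<lambda>p q. 0\<^sub>m 0 0)"
| "dsum_rep (M # Ms) = (\<lambda>p q. four_block_mat (M p q)
        (0\<^sub>m (dim_row (M p q)) (dim_col (dsum_rep Ms p q)))
        (0\<^sub>m (dim_row (dsum_rep Ms p q)) (dim_col (M p q)))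
        (dsum_rep Ms p q))"

definition upset :: "'p set \<Rightarrow> ('p \<Rightarrow> 'p \<Rightarrow> bool) \<Rightarrow> 'p set \<Rightarrow> 'p set" where
  "upset P lo X = {p\<in>P. \<exists>x\<in>X. lo x p}"

definition convex_in :: "'p set \<Rightarrow> ('p \<Rightarrow> 'p \<Rightarrow> bool) \<Rightarrow> 'p set \<Rightarrow> bool" where
  "convex_in P lo S \<longleftrightarrow> S \<subseteq> P \<and>
     (\<forall>a\<in>S. \<forall>b\<in>P. \<forall>c\<in>S. lo a b \<longrightarrow> lo b c \<longrightarrow> b \<in> S)"

definition zigzag_connected :: "('p \<Rightarrow> 'p \<Rightarrow> bool) \<Rightarrow> 'p set \<Rightarrow> bool" where
  "zigzag_connected lo S \<longleftrightarrow>
     (\<forall>x\<in>S. \<forall>y\<in>S. (x, y) \<in> ({(a, b). a \<in> S \<and> b \<in> S \<and> (lo a b \<or> lo b a)})\<^sup>*)"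

definition spread :: "'p set \<Rightarrow> ('p \<Rightarrow> 'p \<Rightarrow> bool) \<Rightarrow> 'p set \<Rightarrow> bool" where
  "spread P lo S \<longleftrightarrow> S \<noteq> {} \<and> convex_in P lo S \<and> zigzag_connected lo S"

definition spread_decomposable :: "'p set \<Rightarrow> ('p \<Rightarrow> 'p \<Rightarrow> bool) \<Rightarrow> ('p,'k::field) rep \<Rightarrow> bool" where
  "spread_decomposable P lo M \<longleftrightarrow>
     (\<exists>Ss. (\<forall>S\<in>set Ss. spread P lo S) \<and> rep_iso P lo M (dsum_rep (map indicator_rep Ss)))"

definition poset_join :: "'p set \<Rightarrow> ('p \<Rightarrow> 'p \<Rightarrow> bool) \<Rightarrow> 'p set \<Rightarrow> 'p" where
  "poset_join P lo S = (THE x. x \<in> P \<and> (\<forall>s\<in>S. lo s x) \<and>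
                          (\<forall>y\<in>P. (\<forall>s\<in>S. lo s y) \<longrightarrow> lo x y))"

definition grid :: "nat \<Rightarrow> (nat \<Rightarrow> nat) \<Rightarrow> nat list set" where
  "grid n m = {x. length x = n \<and> (\<forall>i<n. x ! i < m i)}"

definition grid_le :: "nat list \<Rightarrow> nat list \<Rightarrow> bool" where
  "grid_le x y \<longleftrightarrow> length x = length y \<and> (\<forall>i<length x. x ! i \<le> y ! i)"

definition aligned_incl :: "nat \<Rightarrow> (nat \<Rightarrow> nat) \<Rightarrow> (nat \<Rightarrow> nat) \<Rightarrow> (nat \<Rightarrow> nat \<Rightarrow> nat) \<Rightarrow> bool" where
  "aligned_incl n k m \<iota> \<longleftrightarrow>
     (\<forall>i<n. strict_mono_on {0..<k i} (\<iota> i) \<and> \<iota> i ` {0..<k i} \<subseteq> {0..<m i})"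

definition grid_map :: "(nat \<Rightarrow> nat \<Rightarrow> nat) \<Rightarrow> nat list \<Rightarrow> nat list" where
  "grid_map \<iota> q = map (\<lambda>i. \<iota> i (q ! i)) [0..<length q]"

definition grid_floor :: "nat \<Rightarrow> (nat \<Rightarrow> nat) \<Rightarrow> (nat \<Rightarrow> nat \<Rightarrow> nat) \<Rightarrow> nat list \<Rightarrow> nat list" where
  "grid_floor n k \<iota> p = poset_join (grid n k) grid_le {q \<in> grid n k. grid_le (grid_map \<iota> q) p}"

definition lan_obj :: "('p \<Rightarrow> 'q) \<Rightarrow> ('q,'k) rep \<Rightarrow> ('p,'k) rep" where
  "lan_obj fl N = (\<lambda>p q. N (fl p) (fl q))"

definition lan_mor :: "('p \<Rightarrow> 'q) \<Rightarrow> ('q \<Rightarrow> 'k mat) \<Rightarrow> ('p \<Rightarrow> 'k mat)" where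
  "lan_mor fl g = (\<lambda>p. g (fl p))"

text \<open>C (with unit eta) is a left adjoint of the functor (F, Fm) : rep Q -> rep P,
  in the universal-arrow formulation: eta M : M -> F (C M) is universal.\<close>
definition is_left_adjoint ::
  "'p set \<Rightarrow> ('p \<Rightarrow> 'p \<Rightarrow> bool) \<Rightarrow> 'q set \<Rightarrow> ('q \<Rightarrow> 'q \<Rightarrow> bool)
   \<Rightarrow> (('q,'k::field) rep \<Rightarrow> ('p,'k) rep) \<Rightarrow> (('q \<Rightarrow> 'k mat) \<Rightarrow> ('p \<Rightarrow> 'k mat))
   \<Rightarrow> (('p,'k) rep \<Rightarrow> ('q,'k) rep) \<Rightarrow> (('p,'k) rep \<Rightarrow> 'p \<Rightarrow> 'k mat) \<Rightarrow> bool" where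
  "is_left_adjoint P leP Q leQ F Fm C \<eta> \<longleftrightarrow>
     (\<forall>M. is_rep P leP M \<longrightarrow>
        is_rep Q leQ (C M) \<and> rep_hom P leP M (F (C M)) (\<eta> M) \<and>
        (\<forall>N f. is_rep Q leQ N \<longrightarrow> rep_hom P leP M (F N) f \<longrightarrow>
           (\<exists>g. rep_hom Q leQ (C M) N g \<and> (\<forall>p\<in>P. Fm g p * \<eta> M p = f p) \<and>
              (\<forall>g'. rep_hom Q leQ (C M) N g' \<and> (\<forall>p\<in>P. Fm g' p * \<eta> M p = f p)
                    \<longrightarrow> (\<forall>q\<in>Q. g' q = g q)))))"

end

theory Submission imports Defs begin

definition blk :: "('p,'k::field) rep \<Rightarrow> ('p,'k) rep \<Rightarrow> ('p,'k) rep" where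
  "blk M N = (\<lambda>p q. four_block_mat (M p q) (0\<^sub>m (dim_row (M p q)) (dim_col (N p q)))
     (0\<^sub>m (dim_row (N p q)) (dim_col (M p q))) (N p q))"

lemma dsum_Cons': "dsum_rep (M # Ms) = blk M (dsum_rep Ms)"
  by (simp add: blk_def)

lemma rdim_blk: "rdim (blk M N) p = rdim M p + rdim N p"
  by (simp add: rdim_def blk_def)

lemma is_rep_blk:
  assumes M: "is_rep P lo M" and N: "is_rep P lo N"
  shows "is_rep P lo (blk M N)"
  unfolding is_rep_def
proof (intro conjI ballI impI)
  fix p assume p: "p \<in> P"
  have "M p p = 1\<^sub>m (rdim M p)" "N p p = 1\<^sub>m (rdim N p)" using M N p by (auto simp: is_rep_def)
  then show "blk M N p p = 1\<^sub>m (rdim (blk M N) p)"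
    by (simp only: rdim_blk) (simp add: blk_def)
next
  fix p q assume p: "p \<in> P" and q: "q \<in> P" and l: "lo p q"
  have "M p q \<in> carrier_mat (rdim M q) (rdim M p)" "N p q \<in> carrier_mat (rdim N q) (rdim N p)"
    using M N p q l by (auto simp: is_rep_def)
  then show "blk M N p q \<in> carrier_mat (rdim (blk M N) q) (rdim (blk M N) p)"
    by (simp only: rdim_blk) (simp add: blk_def)
next
  fix p q r assume p: "p \<in> P" and q: "q \<in> P" and r: "r \<in> P" and l1: "lo p q" and l2: "lo q r"
  have c: "M p q \<in> carrier_mat (rdim M q) (rdim M p)" "N p q \<in> carrier_mat (rdim N q) (rdim N p)"
    "M q r \<in> carrier_mat (rdim M r) (rdim M q)" "N q r \<in> carrier_mat (rdim N r) (rdim N q)"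
    "M q r * M p q = M p r" "N q r * N p q = N p r"
    using M N p q r l1 l2 by (auto simp: is_rep_def)
  have c2: "M p r \<in> carrier_mat (rdim M r) (rdim M p)" "N p r \<in> carrier_mat (rdim N r) (rdim N p)"
    using c(5,6) mult_carrier_mat[OF c(3) c(1)] mult_carrier_mat[OF c(4) c(2)] by auto
  have "blk M N q r * blk M N p q = four_block_mat (M q r * M p q + 0\<^sub>m (rdim M r) (rdim N q) * 0\<^sub>m (rdim N q) (rdim M p))
     (M q r * 0\<^sub>m (rdim M q) (rdim N p) + 0\<^sub>m (rdim M r) (rdim N q) * N p q)
     (0\<^sub>m (rdim N r) (rdim M q) * M p q + N q r * 0\<^sub>m (rdim N q) (rdim M p))
     (0\<^sub>m (rdim N r) (rdim M q) * 0\<^sub>m (rdim M q) (rdim N p) + N q r * N p q)"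
    unfolding blk_def
    by (simp only: carrier_matD[OF c(1)] carrier_matD[OF c(2)] carrier_matD[OF c(3)] carrier_matD[OF c(4)])
      (rule mult_four_block_mat; use c in auto)
  also have "\<dots> = blk M N p r"
    using c c2 unfolding blk_def
    by (simp add: carrier_matD)
  finally show "blk M N q r * blk M N p q = blk M N p r" .
qed

lemma is_rep_zero: "is_rep P lo (\<lambda>p q. 0\<^sub>m 0 0 :: 'k::field mat)"
  unfolding is_rep_def rdim_def by (auto intro!: eq_matI)

lemma is_rep_dsum: "(\<And>M. M \<in> set Ms \<Longrightarrow> is_rep P lo M) \<Longrightarrow> is_rep P lo (dsum_rep Ms)"
proof (induction Ms)
  case Nil
  then show ?case using is_rep_zero by simp
next
  case (Cons M Ms)
  then show ?case unfolding dsum_Cons' by (intro is_rep_blk) auto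
qed

lemma ind_dims: "indicator_rep S p q \<in> carrier_mat (if q \<in> S then 1 else 0) (if p \<in> S then 1 else 0)"
  by (simp add: indicator_rep_def)

lemma rdim_ind: "rdim (indicator_rep S) p = (if p \<in> S then 1 else 0)"
  by (simp add: rdim_def indicator_rep_def)

lemma is_rep_ind:
  assumes "convex_in P lo S"
  shows "is_rep P lo (indicator_rep S :: ('p,'k::field) rep)"
  unfolding is_rep_def
proof (intro conjI ballI impI)
  fix p assume "p \<in> P"
  show "(indicator_rep S p p :: 'k mat) = 1\<^sub>m (rdim (indicator_rep S) p)"
    by (auto simp: indicator_rep_def rdim_def intro!: eq_matI)
next
  fix p q assume "p \<in> P" "q \<in> P" "lo p q"
  show "(indicator_rep S p q :: 'k mat) \<in> carrier_mat (rdim (indicator_rep S) q) (rdim (indicator_rep S) p)"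
    by (simp add: rdim_ind ind_dims)
next
  fix p q r assume p: "p \<in> P" and q: "q \<in> P" and r: "r \<in> P" and "lo p q" "lo q r"
  then have cv: "p \<in> S \<Longrightarrow> r \<in> S \<Longrightarrow> q \<in> S" using assms unfolding convex_in_def by blast
  show "(indicator_rep S q r :: 'k mat) * indicator_rep S p q = indicator_rep S p r"
    using cv by (auto simp: indicator_rep_def)
qed

lemma rep_iso_eq:
  assumes M: "is_rep P lo M" and refl: "\<forall>p\<in>P. lo p p"
    and eq: "\<forall>p\<in>P. \<forall>q\<in>P. lo p q \<longrightarrow> M p q = N p q"
  shows "rep_iso P lo M N"
proof -
  have rd: "rdim N p = rdim M p" if "p \<in> P" for p
    using eq refl that by (simp add: rdim_def)
  have c: "M p q \<in> carrier_mat (rdim M q) (rdim M p)" if "p \<in> P" "q \<in> P" "lo p q" for p q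
    using M that by (auto simp: is_rep_def)
  show ?thesis unfolding rep_iso_def
    apply (rule exI[of _ "\<lambda>p. 1\<^sub>m (rdim M p)"], rule exI[of _ "\<lambda>p. 1\<^sub>m (rdim M p)"])
    using rd c eq by (auto simp: rep_hom_def intro: left_mult_one_mat right_mult_one_mat
      simp del: left_mult_one_mat' right_mult_one_mat', metis left_mult_one_mat right_mult_one_mat)
qed

lemma rep_iso_trans:
  assumes M: "is_rep P lo M" and N: "is_rep P lo N" and K: "is_rep P lo K"
    and MN: "rep_iso P lo M N" and NK: "rep_iso P lo N K"
  shows "rep_iso P lo M K"
proof -
  obtain f g where f: "rep_hom P lo M N f" and g: "rep_hom P lo N M g"
    and fg: "\<forall>p\<in>P. g p * f p = 1\<^sub>m (rdim M p) \<and> f p * g p = 1\<^sub>m (rdim N p)"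
    using MN unfolding rep_iso_def by blast
  obtain f' g' where f': "rep_hom P lo N K f'" and g': "rep_hom P lo K N g'"
    and fg': "\<forall>p\<in>P. g' p * f' p = 1\<^sub>m (rdim N p) \<and> f' p * g' p = 1\<^sub>m (rdim K p)"
    using NK unfolding rep_iso_def by blast
  have comp: "rep_hom P lo A C (\<lambda>p. h' p * h p)"
    if A: "is_rep P lo A" and B: "is_rep P lo B" and C: "is_rep P lo C"
      and h: "rep_hom P lo A B h" and h': "rep_hom P lo B C h'" for A B C h h'
    unfolding rep_hom_def
  proof (intro conjI ballI impI)
    fix p assume "p \<in> P"
    then show "h' p * h p \<in> carrier_mat (rdim C p) (rdim A p)"
      using h h' by (auto simp: rep_hom_def)
  next
    fix p q assume p: "p \<in> P" and q: "q \<in> P" and l: "lo p q"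
    have c: "h p \<in> carrier_mat (rdim B p) (rdim A p)" "h q \<in> carrier_mat (rdim B q) (rdim A q)"
      "h' p \<in> carrier_mat (rdim C p) (rdim B p)" "h' q \<in> carrier_mat (rdim C q) (rdim B q)"
      "h q * A p q = B p q * h p" "h' q * B p q = C p q * h' p"
      using h h' p q l by (auto simp: rep_hom_def)
    have d: "A p q \<in> carrier_mat (rdim A q) (rdim A p)" "B p q \<in> carrier_mat (rdim B q) (rdim B p)"
      "C p q \<in> carrier_mat (rdim C q) (rdim C p)" using A B C p q l by (auto simp: is_rep_def)
    have "h' q * h q * A p q = h' q * (h q * A p q)" by (rule assoc_mult_mat[OF c(4) c(2) d(1)])
    also have "\<dots> = h' q * (B p q * h p)" using c by simp
    also have "\<dots> = (h' q * B p q) * h p" by (rule assoc_mult_mat[OF c(4) d(2) c(1), symmetric])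
    also have "\<dots> = (C p q * h' p) * h p" using c by simp
    also have "\<dots> = C p q * (h' p * h p)" by (rule assoc_mult_mat[OF d(3) c(3) c(1)])
    finally show "h' q * h q * A p q = C p q * (h' p * h p)" .
  qed
  have inv: "(g p * g' p) * (f' p * f p) = 1\<^sub>m (rdim M p) \<and> (f' p * f p) * (g p * g' p) = 1\<^sub>m (rdim K p)"
    if p: "p \<in> P" for p
  proof -
    have c: "f p \<in> carrier_mat (rdim N p) (rdim M p)" "g p \<in> carrier_mat (rdim M p) (rdim N p)"
      "f' p \<in> carrier_mat (rdim K p) (rdim N p)" "g' p \<in> carrier_mat (rdim N p) (rdim K p)"
      using f g f' g' p by (auto simp: rep_hom_def)
    have "(g p * g' p) * (f' p * f p) = g p * (g' p * (f' p * f p))"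
      using c by (intro assoc_mult_mat) auto
    also have "g' p * (f' p * f p) = (g' p * f' p) * f p"
      using c by (intro assoc_mult_mat[symmetric]) auto
    also have "\<dots> = f p" using c fg' p by auto
    also have "g p * f p = 1\<^sub>m (rdim M p)" using c fg p by auto
    finally have 1: "(g p * g' p) * (f' p * f p) = 1\<^sub>m (rdim M p)" .
    have "(f' p * f p) * (g p * g' p) = f' p * (f p * (g p * g' p))"
      using c by (intro assoc_mult_mat) auto
    also have "f p * (g p * g' p) = (f p * g p) * g' p"
      using c by (intro assoc_mult_mat[symmetric]) auto
    also have "\<dots> = g' p" using c fg p by auto
    also have "f' p * g' p = 1\<^sub>m (rdim K p)" using c fg' p by auto
    finally show ?thesis using 1 by simp
  qed
  show ?thesis unfolding rep_iso_def
    using comp[OF M N K f f'] comp[OF K N M g' g] inv by blast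
qed


lemma blk_mult:
  fixes A1 :: "'k::field mat"
  assumes "A1 \<in> carrier_mat a b" "A2 \<in> carrier_mat b c" "B1 \<in> carrier_mat a' b'" "B2 \<in> carrier_mat b' c'"
  shows "four_block_mat A1 (0\<^sub>m a b') (0\<^sub>m a' b) B1 * four_block_mat A2 (0\<^sub>m b c') (0\<^sub>m b' c) B2
    = four_block_mat (A1 * A2) (0\<^sub>m a c') (0\<^sub>m a' c) (B1 * B2)"
proof -
  have "four_block_mat A1 (0\<^sub>m a b') (0\<^sub>m a' b) B1 * four_block_mat A2 (0\<^sub>m b c') (0\<^sub>m b' c) B2
    = four_block_mat (A1 * A2 + 0\<^sub>m a b' * 0\<^sub>m b' c) (A1 * 0\<^sub>m b c' + 0\<^sub>m a b' * B2)
       (0\<^sub>m a' b * A2 + B1 * 0\<^sub>m b' c) (0\<^sub>m a' b * 0\<^sub>m b c' + B1 * B2)"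
    using assms by (intro mult_four_block_mat) auto
  also have "\<dots> = four_block_mat (A1 * A2) (0\<^sub>m a c') (0\<^sub>m a' c) (B1 * B2)"
    using assms by (simp add: carrier_matD)
  finally show ?thesis .
qed

lemma blk_eval:
  assumes "M p q \<in> carrier_mat a b" "N p q \<in> carrier_mat a' b'"
  shows "blk M N p q = four_block_mat (M p q) (0\<^sub>m a b') (0\<^sub>m a' b) (N p q)"
  using assms by (simp add: blk_def carrier_matD)

lemma blk_hom:
  assumes M: "is_rep P lo M" and M': "is_rep P lo M'" and N: "is_rep P lo N" and N': "is_rep P lo N'"
    and f: "rep_hom P lo M M' f" and h: "rep_hom P lo N N' h"
  shows "rep_hom P lo (blk M N) (blk M' N')
    (\<lambda>p. four_block_mat (f p) (0\<^sub>m (rdim M' p) (rdim N p)) (0\<^sub>m (rdim N' p) (rdim M p)) (h p))"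
  unfolding rep_hom_def
proof (intro conjI ballI impI)
  fix p assume p: "p \<in> P"
  then show "four_block_mat (f p) (0\<^sub>m (rdim M' p) (rdim N p)) (0\<^sub>m (rdim N' p) (rdim M p)) (h p)
      \<in> carrier_mat (rdim (blk M' N') p) (rdim (blk M N) p)"
    using f h by (auto simp: rdim_blk rep_hom_def)
next
  fix p q assume p: "p \<in> P" and q: "q \<in> P" and l: "lo p q"
  have c: "M p q \<in> carrier_mat (rdim M q) (rdim M p)" "N p q \<in> carrier_mat (rdim N q) (rdim N p)"
    "M' p q \<in> carrier_mat (rdim M' q) (rdim M' p)" "N' p q \<in> carrier_mat (rdim N' q) (rdim N' p)"
    using M N M' N' p q l by (auto simp: is_rep_def)
  have d: "f p \<in> carrier_mat (rdim M' p) (rdim M p)" "f q \<in> carrier_mat (rdim M' q) (rdim M q)"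
    "h p \<in> carrier_mat (rdim N' p) (rdim N p)" "h q \<in> carrier_mat (rdim N' q) (rdim N q)"
    "f q * M p q = M' p q * f p" "h q * N p q = N' p q * h p"
    using f h p q l by (auto simp: rep_hom_def)
  show "four_block_mat (f q) (0\<^sub>m (rdim M' q) (rdim N q)) (0\<^sub>m (rdim N' q) (rdim M q)) (h q) * blk M N p q =
       blk M' N' p q * four_block_mat (f p) (0\<^sub>m (rdim M' p) (rdim N p)) (0\<^sub>m (rdim N' p) (rdim M p)) (h p)"
    unfolding blk_eval[of M p q _ _ N, OF c(1) c(2)] blk_eval[of M' p q _ _ N', OF c(3) c(4)]
    by (subst blk_mult[OF d(2) c(1) d(4) c(2)], subst blk_mult[OF c(3) d(1) c(4) d(3)]) (simp add: d(5,6))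
qed

lemma rep_iso_blk:
  assumes M: "is_rep P lo M" and M': "is_rep P lo M'" and N: "is_rep P lo N" and N': "is_rep P lo N'"
    and i1: "rep_iso P lo M M'" and i2: "rep_iso P lo N N'"
  shows "rep_iso P lo (blk M N) (blk M' N')"
proof -
  obtain f g where f: "rep_hom P lo M M' f" and g: "rep_hom P lo M' M g"
    and fg: "\<forall>p\<in>P. g p * f p = 1\<^sub>m (rdim M p) \<and> f p * g p = 1\<^sub>m (rdim M' p)"
    using i1 unfolding rep_iso_def by blast
  obtain f' g' where f': "rep_hom P lo N N' f'" and g': "rep_hom P lo N' N g'"
    and fg': "\<forall>p\<in>P. g' p * f' p = 1\<^sub>m (rdim N p) \<and> f' p * g' p = 1\<^sub>m (rdim N' p)"
    using i2 unfolding rep_iso_def by blast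
  have inv: "four_block_mat (g p) (0\<^sub>m (rdim M p) (rdim N' p)) (0\<^sub>m (rdim N p) (rdim M' p)) (g' p) *
      four_block_mat (f p) (0\<^sub>m (rdim M' p) (rdim N p)) (0\<^sub>m (rdim N' p) (rdim M p)) (f' p) = 1\<^sub>m (rdim (blk M N) p)
    \<and> four_block_mat (f p) (0\<^sub>m (rdim M' p) (rdim N p)) (0\<^sub>m (rdim N' p) (rdim M p)) (f' p) *
      four_block_mat (g p) (0\<^sub>m (rdim M p) (rdim N' p)) (0\<^sub>m (rdim N p) (rdim M' p)) (g' p) = 1\<^sub>m (rdim (blk M' N') p)"
    if p: "p \<in> P" for p
  proof -
    have c: "f p \<in> carrier_mat (rdim M' p) (rdim M p)" "g p \<in> carrier_mat (rdim M p) (rdim M' p)"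
      "f' p \<in> carrier_mat (rdim N' p) (rdim N p)" "g' p \<in> carrier_mat (rdim N p) (rdim N' p)"
      using f g f' g' p by (auto simp: rep_hom_def)
    show ?thesis
      by (simp only: blk_mult[OF c(2) c(1) c(4) c(3)] blk_mult[OF c(1) c(2) c(3) c(4)] rdim_blk)
        (use fg fg' p in simp)
  qed
  show ?thesis unfolding rep_iso_def
    using blk_hom[OF M M' N N' f f'] blk_hom[OF M' M N' N g g'] inv by blast
qed

lemma rep_iso_refl: "is_rep P lo M \<Longrightarrow> \<forall>p\<in>P. lo p p \<Longrightarrow> rep_iso P lo M M"
  by (rule rep_iso_eq) auto

definition reidx :: "('q \<Rightarrow> 'p) \<Rightarrow> ('p,'k) rep \<Rightarrow> ('q,'k) rep" where
  "reidx r M = (\<lambda>q q'. M (r q) (r q'))"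

lemma rdim_reidx: "rdim (reidx r M) q = rdim M (r q)"
  by (simp add: rdim_def reidx_def)

lemma is_rep_reidx:
  assumes "is_rep P leP M" "\<forall>q\<in>Q. r q \<in> P" "\<forall>q\<in>Q. \<forall>q'\<in>Q. leQ q q' \<longrightarrow> leP (r q) (r q')"
  shows "is_rep Q leQ (reidx r M)"
  using assms unfolding is_rep_def rdim_reidx by (auto simp: reidx_def)

lemma rep_hom_reidx:
  assumes "rep_hom P leP M N f" "\<forall>q\<in>Q. r q \<in> P" "\<forall>q\<in>Q. \<forall>q'\<in>Q. leQ q q' \<longrightarrow> leP (r q) (r q')"
  shows "rep_hom Q leQ (reidx r M) (reidx r N) (\<lambda>q. f (r q))"
  using assms unfolding rep_hom_def rdim_reidx by (auto simp: reidx_def)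

lemma rep_iso_reidx:
  assumes "rep_iso P leP M N" "\<forall>q\<in>Q. r q \<in> P" "\<forall>q\<in>Q. \<forall>q'\<in>Q. leQ q q' \<longrightarrow> leP (r q) (r q')"
  shows "rep_iso Q leQ (reidx r M) (reidx r N)"
proof -
  obtain f g where "rep_hom P leP M N f" "rep_hom P leP N M g"
    "\<forall>p\<in>P. g p * f p = 1\<^sub>m (rdim M p) \<and> f p * g p = 1\<^sub>m (rdim N p)"
    using assms(1) unfolding rep_iso_def by blast
  then show ?thesis unfolding rep_iso_def using assms(2,3)
    by (intro exI[of _ "\<lambda>q. f (r q)"] exI[of _ "\<lambda>q. g (r q)"]) (auto simp: rdim_reidx intro: rep_hom_reidx)
qed

lemma reidx_dsum_ind: "reidx r (dsum_rep (map indicator_rep Ss)) = dsum_rep (map (\<lambda>S. indicator_rep {x. r x \<in> S}) Ss)"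
  by (induction Ss) (auto simp: reidx_def indicator_rep_def fun_eq_iff)


lemma fb_empty: "four_block_mat (0\<^sub>m 0 0 :: 'k::field mat) (0\<^sub>m 0 (dim_col B)) (0\<^sub>m (dim_row B) 0) B = B"
  by (rule eq_matI) auto

lemma ind_split:
  assumes "X = X1 \<union> X2" "X1 \<inter> X2 = {}" "\<not> (p \<in> X1 \<and> q \<in> X2)" "\<not> (p \<in> X2 \<and> q \<in> X1)"
  shows "four_block_mat (indicator_rep X1 p q :: 'k::field mat)
      (0\<^sub>m (dim_row (indicator_rep X1 p q :: 'k mat)) (dim_col (indicator_rep X2 p q :: 'k mat)))
      (0\<^sub>m (dim_row (indicator_rep X2 p q :: 'k mat)) (dim_col (indicator_rep X1 p q :: 'k mat)))
      (indicator_rep X2 p q) = indicator_rep X p q"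
  using assms by (auto simp: indicator_rep_def intro!: eq_matI)

definition mu :: "'p set list \<Rightarrow> nat" where
  "mu Xs = sum_list (map (\<lambda>X. card X * card X + 1) Xs)"

lemma decomp:
  assumes fin: "finite Q" and refl: "\<forall>p\<in>Q. lo p p"
  shows "(\<forall>X\<in>set Xs. convex_in Q lo X) \<Longrightarrow> \<exists>Ts. (\<forall>T\<in>set Ts. spread Q lo T) \<and>
      rep_iso Q lo (dsum_rep (map indicator_rep Xs) :: ('p,'k::field) rep) (dsum_rep (map indicator_rep Ts))"
proof (induction "mu Xs" arbitrary: Xs rule: less_induct)
  case less
  have repX: "is_rep Q lo (dsum_rep (map indicator_rep Ys) :: ('p,'k) rep)"
    if "\<forall>X\<in>set Ys. convex_in Q lo X" for Ys
    using that by (intro is_rep_dsum) (auto intro: is_rep_ind)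
  have repS: "is_rep Q lo (dsum_rep (map indicator_rep Ys) :: ('p,'k) rep)"
    if "\<forall>X\<in>set Ys. spread Q lo X" for Ys
    using that by (intro repX) (auto simp: spread_def)
  show ?case
  proof (cases Xs)
    case Nil
    then show ?thesis using repX[of "[]"] refl by (intro exI[of _ "[]"]) (auto intro: rep_iso_refl)
  next
    case (Cons X Xs')
    have cX: "convex_in Q lo X" and cXs': "\<forall>X\<in>set Xs'. convex_in Q lo X" using less.prems Cons by auto
    have XQ: "X \<subseteq> Q" using cX by (simp add: convex_in_def)
    have mu_lt: "mu Xs' < mu Xs" using Cons by (simp add: mu_def)
    show ?thesis
    proof (cases "X = {}")
      case True
      obtain Ts where Ts: "\<forall>T\<in>set Ts. spread Q lo T"
        "rep_iso Q lo (dsum_rep (map indicator_rep Xs') :: ('p,'k) rep) (dsum_rep (map indicator_rep Ts))"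
        using less.hyps[OF mu_lt cXs'] by blast
      have "dsum_rep (map indicator_rep Xs) p q = (dsum_rep (map indicator_rep Xs') p q :: 'k mat)" for p q
        using True Cons fb_empty by (simp add: indicator_rep_def)
      then have "rep_iso Q lo (dsum_rep (map indicator_rep Xs) :: ('p,'k) rep) (dsum_rep (map indicator_rep Xs'))"
        using less.prems refl by (intro rep_iso_eq repX) auto
      then show ?thesis using Ts rep_iso_trans[OF repX[OF less.prems] repX[OF cXs'] repS[OF Ts(1)] _ Ts(2)]
        by blast
    next
      case False
      then obtain x where x: "x \<in> X" by blast
      define R where "R = {(a, b). a \<in> X \<and> b \<in> X \<and> (lo a b \<or> lo b a)}"
      define X1 where "X1 = {y\<in>X. (x, y) \<in> R\<^sup>*}"
      define X2 where "X2 = X - X1"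
      have symR: "(a, b) \<in> R\<^sup>* \<Longrightarrow> (b, a) \<in> R\<^sup>*" for a b
      proof -
        assume "(a, b) \<in> R\<^sup>*"
        then have "(b, a) \<in> (R\<inverse>)\<^sup>*" by (simp add: rtrancl_converse)
        moreover have "R\<inverse> = R" by (auto simp: R_def)
        ultimately show ?thesis by simp
      qed
      have x1: "x \<in> X1" using x by (simp add: X1_def)
      have nc: "\<not> (lo a b \<or> lo b a)" if "a \<in> X1" "b \<in> X2" for a b
      proof
        assume "lo a b \<or> lo b a"
        then have "(a, b) \<in> R" using that by (auto simp: R_def X1_def X2_def)
        then have "(x, b) \<in> R\<^sup>*" using that by (auto simp: X1_def intro: rtrancl_into_rtrancl)
        then show False using that by (simp add: X1_def X2_def)
      qed
      show ?thesis
      proof (cases "X2 = {}")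
        case True
        have sp: "spread Q lo X"
          unfolding spread_def zigzag_connected_def
        proof (intro conjI ballI)
          show "X \<noteq> {}" using x by blast
          show "convex_in Q lo X" by (rule cX)
          fix y z assume "y \<in> X" "z \<in> X"
          then have "(x, y) \<in> R\<^sup>*" "(x, z) \<in> R\<^sup>*" using True by (auto simp: X2_def X1_def)
          then have "(y, z) \<in> R\<^sup>*" using symR by (meson rtrancl_trans)
          then show "(y, z) \<in> {(a, b). a \<in> X \<and> b \<in> X \<and> (lo a b \<or> lo b a)}\<^sup>*" by (simp add: R_def)
        qed
        obtain Ts where Ts: "\<forall>T\<in>set Ts. spread Q lo T"
          "rep_iso Q lo (dsum_rep (map indicator_rep Xs') :: ('p,'k) rep) (dsum_rep (map indicator_rep Ts))"
          using less.hyps[OF mu_lt cXs'] by blast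
        have "rep_iso Q lo (blk (indicator_rep X) (dsum_rep (map indicator_rep Xs')) :: ('p,'k) rep)
            (blk (indicator_rep X) (dsum_rep (map indicator_rep Ts)))"
          using Ts cX cXs' refl
          by (intro rep_iso_blk is_rep_ind repX repS rep_iso_refl) auto
        then show ?thesis using Ts sp Cons
          by (intro exI[of _ "X # Ts"]) (simp del: dsum_rep.simps add: dsum_Cons')
      next
        case False
        have X1Q: "X1 \<subseteq> Q" "X2 \<subseteq> Q" using XQ by (auto simp: X1_def X2_def)
        have cX1: "convex_in Q lo X1"
          unfolding convex_in_def
        proof (intro conjI ballI impI)
          show "X1 \<subseteq> Q" by (rule X1Q)
          fix a b c assume a: "a \<in> X1" and b: "b \<in> Q" and c: "c \<in> X1" and "lo a b" "lo b c"
          then have bX: "b \<in> X" using cX unfolding convex_in_def X1_def by blast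
          then have "(a, b) \<in> R" using a \<open>lo a b\<close> by (auto simp: R_def X1_def)
          then show "b \<in> X1" using a bX by (auto simp: X1_def intro: rtrancl_into_rtrancl)
        qed
        have cX2: "convex_in Q lo X2"
          unfolding convex_in_def
        proof (intro conjI ballI impI)
          show "X2 \<subseteq> Q" by (rule X1Q)
          fix a b c assume a: "a \<in> X2" and b: "b \<in> Q" and c: "c \<in> X2" and "lo a b" "lo b c"
          then have bX: "b \<in> X" using cX unfolding convex_in_def X2_def by blast
          show "b \<in> X2"
          proof (rule ccontr)
            assume "b \<notin> X2"
            then have "b \<in> X1" using bX by (simp add: X2_def)
            then show False using nc[OF _ c] \<open>lo b c\<close> by blast
          qed
        qed
        have finX: "finite X" using XQ fin finite_subset by blast
        have cards: "card X = card X1 + card X2" "card X1 > 0" "card X2 > 0"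
        proof -
          show "card X = card X1 + card X2" unfolding X2_def
            using finX by (metis X1_def card_Diff_subset le_add_diff_inverse mem_Collect_eq subsetI card_mono finite_subset)
          show "card X1 > 0" using x1 finX by (metis X1_def card_gt_0_iff empty_iff finite_subset mem_Collect_eq subsetI)
          show "card X2 > 0" using False finX by (simp add: X2_def card_gt_0_iff)
        qed
        define Ys where "Ys = X1 # X2 # Xs'"
        have mu2: "mu Ys < mu Xs"
        proof -
          have "card X1 * card X1 + 1 + (card X2 * card X2 + 1) < card X * card X + 1"
          proof -
            have h1: "1 \<le> card X1 * card X2" using cards by simp
            have h2: "card X * card X = card X1 * card X1 + card X2 * card X2 + 2 * (card X1 * card X2)"
              using cards(1) by (simp add: algebra_simps)
            show ?thesis using h1 h2 by linarith
          qed
          then show ?thesis using Cons by (simp add: mu_def Ys_def)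
        qed
        have cYs: "\<forall>X\<in>set Ys. convex_in Q lo X" using cX1 cX2 cXs' by (simp add: Ys_def)
        obtain Ts where Ts: "\<forall>T\<in>set Ts. spread Q lo T"
          "rep_iso Q lo (dsum_rep (map indicator_rep Ys) :: ('p,'k) rep) (dsum_rep (map indicator_rep Ts))"
          using less.hyps[OF mu2 cYs] by blast
        have eq: "dsum_rep (map indicator_rep Xs) p q = (dsum_rep (map indicator_rep Ys) p q :: 'k mat)"
          if "p \<in> Q" "q \<in> Q" "lo p q" for p q
        proof -
          have sp: "X = X1 \<union> X2" "X1 \<inter> X2 = {}" "\<not> (p \<in> X1 \<and> q \<in> X2)" "\<not> (p \<in> X2 \<and> q \<in> X1)"
            using nc that by (auto simp: X2_def X1_def)
          show ?thesis
            unfolding Cons Ys_def list.map dsum_Cons' blk_def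
            by (subst assoc_four_block_mat) (simp only: ind_split[OF sp])
        qed
        have "rep_iso Q lo (dsum_rep (map indicator_rep Xs) :: ('p,'k) rep) (dsum_rep (map indicator_rep Ys))"
          using eq less.prems refl by (intro rep_iso_eq repX) auto
        then show ?thesis using Ts rep_iso_trans[OF repX[OF less.prems] repX[OF cYs] repS[OF Ts(1)] _ Ts(2)]
          by blast
      qed
    qed
  qed
qed

lemma comp_G:
  fixes \<phi> :: "nat \<Rightarrow> nat"
  assumes "j0 < K" "\<phi> j0 \<le> x"
  shows "(GREATEST j. j < K \<and> \<phi> j \<le> x) < K \<and> \<phi> (GREATEST j. j < K \<and> \<phi> j \<le> x) \<le> x
    \<and> (\<forall>j. j < K \<and> \<phi> j \<le> x \<longrightarrow> j \<le> (GREATEST j. j < K \<and> \<phi> j \<le> x))"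
proof -
  have b: "\<And>y. y < K \<and> \<phi> y \<le> x \<Longrightarrow> y \<le> K" by auto
  have "(GREATEST j. j < K \<and> \<phi> j \<le> x) < K \<and> \<phi> (GREATEST j. j < K \<and> \<phi> j \<le> x) \<le> x"
    using GreatestI_nat[of "\<lambda>j. j < K \<and> \<phi> j \<le> x", OF _ b] assms by blast
  moreover have "\<forall>j. j < K \<and> \<phi> j \<le> x \<longrightarrow> j \<le> (GREATEST j. j < K \<and> \<phi> j \<le> x)"
    using Greatest_le_nat[of "\<lambda>j. j < K \<and> \<phi> j \<le> x", OF _ b] by blast
  ultimately show ?thesis by blast
qed

lemma smono_le: fixes \<phi> :: "nat \<Rightarrow> nat" shows "strict_mono_on {0..<K} \<phi> \<Longrightarrow> a \<le> b \<Longrightarrow> b < K \<Longrightarrow> \<phi> a \<le> \<phi> b"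
proof (cases "a = b")
  case False
  assume "strict_mono_on {0..<K} \<phi>" "a \<le> b" "b < K"
  then show ?thesis using False strict_mono_onD[of "{0..<K}" \<phi> a b] by simp
qed simp

lemma comp_galois:
  fixes \<phi> :: "nat \<Rightarrow> nat"
  assumes sm: "strict_mono_on {0..<K} \<phi>" and im: "\<phi> ` {0..<K} \<subseteq> {0..<M}"
    and x: "x < M" and y: "y < K" and j0: "j0 < K" "\<phi> j0 \<le> x"
  shows "(GREATEST j. j < K \<and> \<phi> j \<le> x) \<le> y \<longleftrightarrow> x \<le> (if Suc y < K then \<phi> (Suc y) - 1 else M - 1)"
proof -
  let ?G = "GREATEST j. j < K \<and> \<phi> j \<le> x"
  note G = comp_G[of j0 K \<phi> x, OF j0]
  show ?thesis
  proof
    assume le: "?G \<le> y"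
    show "x \<le> (if Suc y < K then \<phi> (Suc y) - 1 else M - 1)"
    proof (cases "Suc y < K")
      case True
      have "\<not> \<phi> (Suc y) \<le> x" using G le True by (metis not_less_eq_eq)
      then show ?thesis using True by simp
    next
      case False then show ?thesis using x by simp
    qed
  next
    assume le: "x \<le> (if Suc y < K then \<phi> (Suc y) - 1 else M - 1)"
    show "?G \<le> y"
    proof (rule ccontr)
      assume "\<not> ?G \<le> y"
      then have sy: "Suc y \<le> ?G" by simp
      then have sK: "Suc y < K" using G by simp
      have "\<phi> (Suc y) \<le> \<phi> ?G" using smono_le[OF sm sy] G by simp
      moreover have "\<phi> y < \<phi> (Suc y)" using strict_mono_onD[OF sm, of y "Suc y"] sK by simp
      moreover have "\<phi> ?G \<le> x" using G by blast
      moreover have "x \<le> \<phi> (Suc y) - 1" using le sK by simp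
      ultimately show False by linarith
    qed
  qed
qed

lemma comp_R:
  fixes \<phi> :: "nat \<Rightarrow> nat"
  assumes sm: "strict_mono_on {0..<K} \<phi>" and im: "\<phi> ` {0..<K} \<subseteq> {0..<M}" and y: "y < K"
  shows "(if Suc y < K then \<phi> (Suc y) - 1 else M - 1) < M \<and> \<phi> y \<le> (if Suc y < K then \<phi> (Suc y) - 1 else M - 1)"
proof (cases "Suc y < K")
  case True
  have "\<phi> y < \<phi> (Suc y)" using strict_mono_onD[OF sm, of y "Suc y"] True by simp
  moreover have "\<phi> (Suc y) < M" using im True by (auto simp: image_subset_iff)
  ultimately show ?thesis using True by (simp only: if_True) arith
next
  case False
  have "\<phi> y < M" using im y by (auto simp: image_subset_iff)
  then show ?thesis using False by simp
qed

lemma grid_le_refl: "grid_le x x" by (simp add: grid_le_def)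
lemma grid_le_trans: "grid_le x y \<Longrightarrow> grid_le y z \<Longrightarrow> grid_le x z"
  unfolding grid_le_def by (metis order_trans)
lemma grid_le_antisym: "grid_le x y \<Longrightarrow> grid_le y x \<Longrightarrow> x = y"
  by (auto simp: grid_le_def intro!: nth_equalityI intro: antisym)

lemma finite_grid: "finite (grid n k)"
proof -
  have "grid n k \<subseteq> {xs. set xs \<subseteq> (\<Union>i<n. {..<k i}) \<and> length xs = n}"
    by (force simp: grid_def in_set_conv_nth)
  moreover have "finite {xs. set xs \<subseteq> (\<Union>i<n. {..<k i}) \<and> length xs = n}"
    by (intro finite_lists_length_eq) auto
  ultimately show ?thesis by (rule finite_subset)
qed


definition Gf :: "(nat \<Rightarrow> nat) \<Rightarrow> (nat \<Rightarrow> nat \<Rightarrow> nat) \<Rightarrow> nat \<Rightarrow> nat \<Rightarrow> nat" where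
  "Gf k \<iota> i x = (GREATEST j. j < k i \<and> \<iota> i j \<le> x)"
definition Rf :: "(nat \<Rightarrow> nat) \<Rightarrow> (nat \<Rightarrow> nat) \<Rightarrow> (nat \<Rightarrow> nat \<Rightarrow> nat) \<Rightarrow> nat \<Rightarrow> nat \<Rightarrow> nat" where
  "Rf k m \<iota> i y = (if Suc y < k i then \<iota> i (Suc y) - 1 else m i - 1)"
definition flr :: "nat \<Rightarrow> (nat \<Rightarrow> nat) \<Rightarrow> (nat \<Rightarrow> nat \<Rightarrow> nat) \<Rightarrow> nat list \<Rightarrow> nat list" where
  "flr n k \<iota> p = map (\<lambda>i. Gf k \<iota> i (p ! i)) [0..<n]"
definition rr :: "nat \<Rightarrow> (nat \<Rightarrow> nat) \<Rightarrow> (nat \<Rightarrow> nat) \<Rightarrow> (nat \<Rightarrow> nat \<Rightarrow> nat) \<Rightarrow> nat list \<Rightarrow> nat list" where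
  "rr n k m \<iota> q = map (\<lambda>i. Rf k m \<iota> i (q ! i)) [0..<n]"

lemma wit:
  assumes up: "upset (grid n m) grid_le (grid_map \<iota> ` grid n k) = grid n m"
    and p: "p \<in> grid n m" and i: "i < n"
  shows "\<exists>j0<k i. \<iota> i j0 \<le> p ! i"
proof -
  have "p \<in> upset (grid n m) grid_le (grid_map \<iota> ` grid n k)" using up p by simp
  then obtain q where q: "q \<in> grid n k" and le: "grid_le (grid_map \<iota> q) p"
    by (auto simp: upset_def)
  have lq: "length q = n" and qi: "q ! i < k i" using q i by (auto simp: grid_def)
  have "grid_map \<iota> q ! i \<le> p ! i" using le i lq by (auto simp: grid_le_def grid_map_def)
  then have "\<iota> i (q ! i) \<le> p ! i" using i lq by (simp add: grid_map_def)
  then show ?thesis using qi by blast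
qed

context
  fixes n :: nat and m k :: "nat \<Rightarrow> nat" and \<iota> :: "nat \<Rightarrow> nat \<Rightarrow> nat"
  assumes al: "aligned_incl n k m \<iota>"
    and up: "upset (grid n m) grid_le (grid_map \<iota> ` grid n k) = grid n m"
begin

lemma sm: "i < n \<Longrightarrow> strict_mono_on {0..<k i} (\<iota> i)" and im: "i < n \<Longrightarrow> \<iota> i ` {0..<k i} \<subseteq> {0..<m i}"
  using al by (auto simp: aligned_incl_def)

lemma flr_props:
  assumes p: "p \<in> grid n m"
  shows "flr n k \<iota> p \<in> grid n k \<and> grid_le (grid_map \<iota> (flr n k \<iota> p)) p \<and>
    (\<forall>q\<in>grid n k. grid_le (grid_map \<iota> q) p \<longrightarrow> grid_le q (flr n k \<iota> p))"
proof -
  have lp: "length p = n" using p by (simp add: grid_def)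
  have G: "Gf k \<iota> i (p ! i) < k i \<and> \<iota> i (Gf k \<iota> i (p ! i)) \<le> p ! i
     \<and> (\<forall>j. j < k i \<and> \<iota> i j \<le> p ! i \<longrightarrow> j \<le> Gf k \<iota> i (p ! i))" if i: "i < n" for i
  proof -
    obtain j0 where "j0 < k i" "\<iota> i j0 \<le> p ! i" using wit[OF up p i] by blast
    then show ?thesis unfolding Gf_def by (rule comp_G)
  qed
  show ?thesis
  proof (intro conjI ballI impI)
    show "flr n k \<iota> p \<in> grid n k" using G by (simp add: flr_def grid_def)
    show "grid_le (grid_map \<iota> (flr n k \<iota> p)) p" using G lp by (simp add: flr_def grid_le_def grid_map_def)
    fix q assume q: "q \<in> grid n k" and le: "grid_le (grid_map \<iota> q) p"
    have lq: "length q = n" using q by (simp add: grid_def)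
    show "grid_le q (flr n k \<iota> p)"
      unfolding grid_le_def
    proof (intro conjI allI impI)
      show "length q = length (flr n k \<iota> p)" using lq by (simp add: flr_def)
      fix i assume "i < length q"
      then have i: "i < n" using lq by simp
      have "\<iota> i (q ! i) \<le> p ! i" using le i lq by (auto simp: grid_le_def grid_map_def)
      moreover have "q ! i < k i" using q i by (simp add: grid_def)
      ultimately show "q ! i \<le> flr n k \<iota> p ! i" using G[OF i] i by (simp add: flr_def)
    qed
  qed
qed

lemma fl_eq:
  assumes p: "p \<in> grid n m"
  shows "grid_floor n k \<iota> p = flr n k \<iota> p"
proof -
  note F = flr_props[OF p]
  show ?thesis
    unfolding grid_floor_def poset_join_def
  proof (rule the_equality)
    show "flr n k \<iota> p \<in> grid n k \<and> (\<forall>s\<in>{q \<in> grid n k. grid_le (grid_map \<iota> q) p}. grid_le s (flr n k \<iota> p)) \<and>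
      (\<forall>y\<in>grid n k. (\<forall>s\<in>{q \<in> grid n k. grid_le (grid_map \<iota> q) p}. grid_le s y) \<longrightarrow> grid_le (flr n k \<iota> p) y)"
      using F by blast
    fix x assume x: "x \<in> grid n k \<and> (\<forall>s\<in>{q \<in> grid n k. grid_le (grid_map \<iota> q) p}. grid_le s x) \<and>
      (\<forall>y\<in>grid n k. (\<forall>s\<in>{q \<in> grid n k. grid_le (grid_map \<iota> q) p}. grid_le s y) \<longrightarrow> grid_le x y)"
    have "grid_le (flr n k \<iota> p) x" using x F by blast
    moreover have "grid_le x (flr n k \<iota> p)" using x F by blast
    ultimately show "x = flr n k \<iota> p" by (simp add: grid_le_antisym)
  qed
qed

lemma galois:
  assumes p: "p \<in> grid n m" and q: "q \<in> grid n k"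
  shows "grid_le (flr n k \<iota> p) q \<longleftrightarrow> grid_le p (rr n k m \<iota> q)"
proof -
  have lp: "length p = n" using p by (simp add: grid_def)
  have lq: "length q = n" using q by (simp add: grid_def)
  have c: "Gf k \<iota> i (p ! i) \<le> q ! i \<longleftrightarrow> p ! i \<le> Rf k m \<iota> i (q ! i)" if i: "i < n" for i
  proof -
    obtain j0 where "j0 < k i" "\<iota> i j0 \<le> p ! i" using wit[OF up p i] by blast
    moreover have "p ! i < m i" "q ! i < k i" using p q i by (auto simp: grid_def)
    ultimately show ?thesis unfolding Gf_def Rf_def using comp_galois[OF sm[OF i] im[OF i]] by blast
  qed
  show ?thesis using c lp lq by (auto simp: grid_le_def flr_def rr_def)
qed

lemma rr_props:
  assumes q: "q \<in> grid n k"
  shows "rr n k m \<iota> q \<in> grid n m \<and> grid_le (grid_map \<iota> q) (rr n k m \<iota> q)"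
proof -
  have lq: "length q = n" using q by (simp add: grid_def)
  have c: "Rf k m \<iota> i (q ! i) < m i \<and> \<iota> i (q ! i) \<le> Rf k m \<iota> i (q ! i)" if i: "i < n" for i
    using comp_R[OF sm[OF i] im[OF i]] q i unfolding Rf_def by (auto simp: grid_def)
  show ?thesis using c lq by (auto simp: grid_def grid_le_def rr_def grid_map_def)
qed

lemma F1: "p \<in> grid n m \<Longrightarrow> grid_floor n k \<iota> p \<in> grid n k"
  using fl_eq flr_props by simp
lemma F2: "q \<in> grid n k \<Longrightarrow> rr n k m \<iota> q \<in> grid n m"
  using rr_props by simp
lemma F3: "p \<in> grid n m \<Longrightarrow> q \<in> grid n k \<Longrightarrow> grid_le (grid_floor n k \<iota> p) q \<longleftrightarrow> grid_le p (rr n k m \<iota> q)"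
  using fl_eq galois by simp
lemma F4: "q \<in> grid n k \<Longrightarrow> grid_floor n k \<iota> (rr n k m \<iota> q) = q"
proof -
  assume q: "q \<in> grid n k"
  have r: "rr n k m \<iota> q \<in> grid n m" using rr_props q by simp
  have "grid_le (grid_floor n k \<iota> (rr n k m \<iota> q)) q" using F3[OF r q] grid_le_refl by simp
  moreover have "grid_le q (grid_floor n k \<iota> (rr n k m \<iota> q))"
    using flr_props[OF r] rr_props[OF q] q fl_eq[OF r] by simp
  ultimately show ?thesis by (rule grid_le_antisym)
qed

end


theorem mainTheorem11:
  fixes n :: nat and m k :: "nat \<Rightarrow> nat" and \<iota> :: "nat \<Rightarrow> nat \<Rightarrow> nat"
  assumes "aligned_incl n k m \<iota>"
    and "upset (grid n m) grid_le (grid_map \<iota> ` grid n k) = grid n m"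
  shows "\<exists>(C :: (nat list, 'k::field) rep \<Rightarrow> (nat list, 'k) rep) \<eta>.
     is_left_adjoint (grid n m) grid_le (grid n k) grid_le
        (lan_obj (grid_floor n k \<iota>)) (lan_mor (grid_floor n k \<iota>)) C \<eta> \<and>
     (\<forall>A B. A \<subseteq> grid n m \<longrightarrow> B \<subseteq> grid n m \<longrightarrow> (\<forall>b\<in>B. \<exists>a\<in>A. grid_le a b) \<longrightarrow>
        rep_iso (grid n k) grid_le
          (C (indicator_rep (upset (grid n m) grid_le A - upset (grid n m) grid_le B)))
          (indicator_rep (upset (grid n k) grid_le (grid_floor n k \<iota> ` A)
                          - upset (grid n k) grid_le (grid_floor n k \<iota> ` B)))) \<and>
     (\<forall>M. is_rep (grid n m) grid_le M \<longrightarrow> spread_decomposable (grid n m) grid_le M \<longrightarrow>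
        spread_decomposable (grid n k) grid_le (C M))"
proof -
  define P where "P = grid n m"
  define Q where "Q = grid n k"
  define fl where "fl = grid_floor n k \<iota>"
  define r where "r = rr n k m \<iota>"
  have F1: "\<And>p. p \<in> P \<Longrightarrow> fl p \<in> Q" using F1[OF assms] by (simp add: P_def Q_def fl_def)
  have F2: "\<And>q. q \<in> Q \<Longrightarrow> r q \<in> P" using F2[OF assms] by (simp add: P_def Q_def r_def)
  have F3: "\<And>p q. p \<in> P \<Longrightarrow> q \<in> Q \<Longrightarrow> grid_le (fl p) q \<longleftrightarrow> grid_le p (r q)"
    using F3[OF assms] by (simp add: P_def Q_def r_def fl_def)
  have F4: "\<And>q. q \<in> Q \<Longrightarrow> fl (r q) = q" using F4[OF assms] by (simp add: Q_def r_def fl_def)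
  have rmono: "\<forall>q\<in>Q. \<forall>q'\<in>Q. grid_le q q' \<longrightarrow> grid_le (r q) (r q')"
    using F2 F3 F4 by metis
  have pr: "\<And>p. p \<in> P \<Longrightarrow> grid_le p (r (fl p))" using F1 F3 grid_le_refl by blast
  have flmono: "\<And>p p'. p \<in> P \<Longrightarrow> p' \<in> P \<Longrightarrow> grid_le p p' \<Longrightarrow> grid_le (fl p) (fl p')"
    using F1 F3 pr grid_le_trans by blast
  have rQP: "\<forall>q\<in>Q. r q \<in> P" using F2 by blast
  have reflQ: "\<forall>q\<in>Q. grid_le q q" by (simp add: grid_le_refl)
  define C :: "(nat list, 'k) rep \<Rightarrow> (nat list, 'k) rep" where "C = reidx r"
  define \<eta> :: "(nat list, 'k) rep \<Rightarrow> nat list \<Rightarrow> 'k mat" where "\<eta> = (\<lambda>M p. M p (r (fl p)))"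
  have CM: "is_rep Q grid_le (C M)" if "is_rep P grid_le M" for M :: "(nat list, 'k) rep"
    unfolding C_def using that rQP rmono by (rule is_rep_reidx)
  have adj: "is_left_adjoint P grid_le Q grid_le (lan_obj fl) (lan_mor fl) C \<eta>"
    unfolding is_left_adjoint_def
  proof (intro allI impI conjI)
    fix M :: "(nat list, 'k) rep" assume M: "is_rep P grid_le M"
    show "is_rep Q grid_le (C M)" by (rule CM[OF M])
    have Mc: "\<And>p q. p \<in> P \<Longrightarrow> q \<in> P \<Longrightarrow> grid_le p q \<Longrightarrow> M p q \<in> carrier_mat (rdim M q) (rdim M p)"
      and Mid: "\<And>p. p \<in> P \<Longrightarrow> M p p = 1\<^sub>m (rdim M p)"
      and Mcomp: "\<And>p q s. p \<in> P \<Longrightarrow> q \<in> P \<Longrightarrow> s \<in> P \<Longrightarrow> grid_le p q \<Longrightarrow> grid_le q s \<Longrightarrow> M q s * M p q = M p s"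
      using M unfolding is_rep_def by blast+
    have rdl: "rdim (lan_obj fl (C M)) p = rdim M (r (fl p))" for p
      by (simp add: rdim_def lan_obj_def C_def reidx_def)
    show "rep_hom P grid_le M (lan_obj fl (C M)) (\<eta> M)"
      unfolding rep_hom_def
    proof (intro conjI ballI impI)
      fix p assume p: "p \<in> P"
      show "\<eta> M p \<in> carrier_mat (rdim (lan_obj fl (C M)) p) (rdim M p)"
        unfolding rdl \<eta>_def using Mc[OF p F2[OF F1[OF p]] pr[OF p]] .
    next
      fix p p' assume p: "p \<in> P" and p': "p' \<in> P" and l: "grid_le p p'"
      have a: "r (fl p) \<in> P" "r (fl p') \<in> P" using F1 F2 p p' by auto
      have b: "grid_le (r (fl p)) (r (fl p'))" using rmono F1 p p' flmono l by blast
      have "\<eta> M p' * M p p' = M p (r (fl p'))"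
        unfolding \<eta>_def using Mcomp[OF p p' a(2) l pr[OF p']] .
      moreover have "lan_obj fl (C M) p p' * \<eta> M p = M p (r (fl p'))"
        unfolding \<eta>_def lan_obj_def C_def reidx_def using Mcomp[OF p a(1) a(2) pr[OF p] b] .
      ultimately show "\<eta> M p' * M p p' = lan_obj fl (C M) p p' * \<eta> M p" by simp
    qed
      fix N :: "(nat list, 'k) rep" and f :: "nat list \<Rightarrow> 'k mat" assume N: "is_rep Q grid_le N" and f: "rep_hom P grid_le M (lan_obj fl N) f"
      have Nid: "\<And>q. q \<in> Q \<Longrightarrow> N q q = 1\<^sub>m (rdim N q)" using N unfolding is_rep_def by blast
      have rdN: "rdim (lan_obj fl N) p = rdim N (fl p)" for p by (simp add: rdim_def lan_obj_def)
      have fc: "\<And>p. p \<in> P \<Longrightarrow> f p \<in> carrier_mat (rdim N (fl p)) (rdim M p)"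
        and fcomm: "\<And>p q. p \<in> P \<Longrightarrow> q \<in> P \<Longrightarrow> grid_le p q \<Longrightarrow> f q * M p q = N (fl p) (fl q) * f p"
        using f unfolding rep_hom_def lan_obj_def rdN[unfolded lan_obj_def] by blast+
      define g where "g = (\<lambda>q. f (r q))"
      have g: "rep_hom Q grid_le (C M) N g"
        unfolding rep_hom_def
      proof (intro conjI ballI impI)
        fix q assume q: "q \<in> Q"
        show "g q \<in> carrier_mat (rdim N q) (rdim (C M) q)"
          using fc[OF F2[OF q]] F4[OF q] by (simp add: g_def C_def rdim_reidx)
      next
        fix q q' assume q: "q \<in> Q" and q': "q' \<in> Q" and l: "grid_le q q'"
        show "g q' * C M q q' = N q q' * g q"
          using fcomm[OF F2[OF q] F2[OF q'] rmono[rule_format, OF q q' l]] F4[OF q] F4[OF q']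
          by (simp add: g_def C_def reidx_def)
      qed
      have fac: "\<forall>p\<in>P. lan_mor fl g p * \<eta> M p = f p"
      proof
        fix p assume p: "p \<in> P"
        have a: "r (fl p) \<in> P" using F1 F2 p by auto
        have "lan_mor fl g p * \<eta> M p = f (r (fl p)) * M p (r (fl p))"
          by (simp add: lan_mor_def g_def \<eta>_def)
        also have "\<dots> = N (fl p) (fl (r (fl p))) * f p" using fcomm[OF p a pr[OF p]] .
        also have "\<dots> = N (fl p) (fl p) * f p" using F4[OF F1[OF p]] by simp
        also have "\<dots> = f p" using Nid[OF F1[OF p]] fc[OF p] by simp
        finally show "lan_mor fl g p * \<eta> M p = f p" .
      qed
      have uniq: "\<forall>g'. rep_hom Q grid_le (C M) N g' \<and> (\<forall>p\<in>P. lan_mor fl g' p * \<eta> M p = f p)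
                    \<longrightarrow> (\<forall>q\<in>Q. g' q = g q)"
      proof (intro allI impI ballI)
        fix g' :: "nat list \<Rightarrow> 'k mat" and q assume g': "rep_hom Q grid_le (C M) N g' \<and> (\<forall>p\<in>P. lan_mor fl g' p * \<eta> M p = f p)"
          and q: "q \<in> Q"
        have "g' q \<in> carrier_mat (rdim N q) (rdim (C M) q)" using g' q unfolding rep_hom_def by blast
        then have gc: "g' q \<in> carrier_mat (rdim N q) (rdim M (r q))" by (simp add: C_def rdim_reidx)
        have "lan_mor fl g' (r q) * \<eta> M (r q) = f (r q)" using g' F2[OF q] by blast
        then have "g' q * M (r q) (r q) = f (r q)" using F4[OF q] by (simp add: lan_mor_def \<eta>_def)
        then show "g' q = g q" using Mid[OF F2[OF q]] gc by (simp add: g_def)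
      qed
      show "\<exists>g. rep_hom Q grid_le (C M) N g \<and> (\<forall>p\<in>P. lan_mor fl g p * \<eta> M p = f p) \<and>
              (\<forall>g'. rep_hom Q grid_le (C M) N g' \<and> (\<forall>p\<in>P. lan_mor fl g' p * \<eta> M p = f p)
                    \<longrightarrow> (\<forall>q\<in>Q. g' q = g q))"
        using g fac uniq by blast
  qed
  have upr: "r q \<in> upset P grid_le A \<longleftrightarrow> q \<in> upset Q grid_le (fl ` A)" if "A \<subseteq> P" "q \<in> Q" for A q
    using that F1 F2 F3 unfolding upset_def by (auto; meson subsetD)
  have convU: "convex_in P grid_le (upset P grid_le A - upset P grid_le B)" for A B
    unfolding convex_in_def upset_def by (auto intro: grid_le_trans)
  have part2: "rep_iso Q grid_le (C (indicator_rep (upset P grid_le A - upset P grid_le B)))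
          (indicator_rep (upset Q grid_le (fl ` A) - upset Q grid_le (fl ` B)))"
    if "A \<subseteq> P" "B \<subseteq> P" for A B
  proof (rule rep_iso_eq)
    show "is_rep Q grid_le (C (indicator_rep (upset P grid_le A - upset P grid_le B)))"
      by (intro CM is_rep_ind convU)
    show "\<forall>p\<in>Q. grid_le p p" by (rule reflQ)
    show "\<forall>p\<in>Q. \<forall>q\<in>Q. grid_le p q \<longrightarrow> C (indicator_rep (upset P grid_le A - upset P grid_le B)) p q =
          indicator_rep (upset Q grid_le (fl ` A) - upset Q grid_le (fl ` B)) p q"
    proof (intro ballI impI)
      fix p q assume p: "p \<in> Q" and q: "q \<in> Q" and "grid_le p q"
      have e1: "(r p \<in> upset P grid_le A - upset P grid_le B) = (p \<in> upset Q grid_le (fl ` A) - upset Q grid_le (fl ` B))"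
        using upr[OF that(1) p] upr[OF that(2) p] by blast
      have e2: "(r q \<in> upset P grid_le A - upset P grid_le B) = (q \<in> upset Q grid_le (fl ` A) - upset Q grid_le (fl ` B))"
        using upr[OF that(1) q] upr[OF that(2) q] by blast
      show "C (indicator_rep (upset P grid_le A - upset P grid_le B)) p q =
          indicator_rep (upset Q grid_le (fl ` A) - upset Q grid_le (fl ` B)) p q"
        unfolding C_def reidx_def indicator_rep_def e1 e2 ..
    qed
  qed
  have part3: "spread_decomposable Q grid_le (C M)"
    if M: "is_rep P grid_le M" and sd: "spread_decomposable P grid_le M" for M :: "(nat list, 'k) rep"
  proof -
    obtain Ss where Ss: "\<forall>S\<in>set Ss. spread P grid_le S"
      and iso: "rep_iso P grid_le M (dsum_rep (map indicator_rep Ss))"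
      using sd unfolding spread_decomposable_def by blast
    define D :: "(nat list, 'k) rep" where "D = dsum_rep (map indicator_rep Ss)"
    have D: "is_rep P grid_le D" unfolding D_def using Ss
      by (intro is_rep_dsum) (auto simp: spread_def intro: is_rep_ind)
    define Xs where "Xs = map (\<lambda>S. {x\<in>Q. r x \<in> S}) Ss"
    have cXs: "\<forall>X\<in>set Xs. convex_in Q grid_le X"
    proof
      fix X assume "X \<in> set Xs"
      then obtain S where S: "S \<in> set Ss" and X: "X = {x\<in>Q. r x \<in> S}" by (auto simp: Xs_def)
      have cS: "convex_in P grid_le S" using Ss S by (simp add: spread_def)
      show "convex_in Q grid_le X" unfolding X convex_in_def
      proof (intro conjI ballI impI)
        fix a b c assume "a \<in> {x \<in> Q. r x \<in> S}" "b \<in> Q" "c \<in> {x \<in> Q. r x \<in> S}" "grid_le a b" "grid_le b c"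
        then show "b \<in> {x \<in> Q. r x \<in> S}" using cS rmono F2 unfolding convex_in_def by blast
      qed auto
    qed
    have repXs: "is_rep Q grid_le (dsum_rep (map indicator_rep Xs) :: (nat list, 'k) rep)"
      using cXs by (intro is_rep_dsum) (auto intro: is_rep_ind)
    have eqD: "reidx r (dsum_rep (map indicator_rep Ts)) q q' =
        (dsum_rep (map indicator_rep (map (\<lambda>S. {x\<in>Q. r x \<in> S}) Ts)) q q' :: 'k mat)"
      if "q \<in> Q" "q' \<in> Q" for q q' and Ts :: "nat list set list"
      using that by (induction Ts) (auto simp: reidx_def indicator_rep_def)
    have i1: "rep_iso Q grid_le (C M) (C D)"
      unfolding C_def using iso rQP rmono by (simp add: D_def rep_iso_reidx)
    have i2: "rep_iso Q grid_le (C D) (dsum_rep (map indicator_rep Xs))"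
      using CM[OF D] reflQ eqD by (intro rep_iso_eq) (auto simp: C_def D_def Xs_def)
    obtain Ts where Ts: "\<forall>T\<in>set Ts. spread Q grid_le T"
      and i3: "rep_iso Q grid_le (dsum_rep (map indicator_rep Xs) :: (nat list, 'k) rep) (dsum_rep (map indicator_rep Ts))"
      using decomp[OF finite_grid[of n k, folded Q_def] reflQ cXs] by blast
    have repTs: "is_rep Q grid_le (dsum_rep (map indicator_rep Ts) :: (nat list, 'k) rep)"
      using Ts by (intro is_rep_dsum) (auto simp: spread_def intro: is_rep_ind)
    have "rep_iso Q grid_le (C M) (dsum_rep (map indicator_rep Xs))"
      by (rule rep_iso_trans[OF CM[OF M] CM[OF D] repXs i1 i2])
    then have "rep_iso Q grid_le (C M) (dsum_rep (map indicator_rep Ts))"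
      by (rule rep_iso_trans[OF CM[OF M] repXs repTs _ i3])
    then show ?thesis unfolding spread_decomposable_def using Ts by blast
  qed
  show ?thesis
    using adj part2 part3 unfolding P_def Q_def fl_def by blast
qed

end
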